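(* Let $F\in Sh^{s,0}_{\Lambda_L}(X)\cap Mod(X)$ be reduced and let $f=(f_1,\dots,f_r)$ and $g=(g_1,\dots,g_r)$ be two local trivializations for $F$. Then $\epsilon_{(F,f)}$ and $\epsilon_{(F,g)}$ are equivalent under the dilation action, i.e. they define the same element of $\mathcal{A}ug$.
   Context: $X=\mathbb{R}^3$ or $S^3$, $k$ a field, $(L,L')$ an $r$-component framed oriented link, $L=K_1\sqcup\dots\sqcup K_r$. Sheaves in $Sh^{s,0}_{\Lambda_L}(X)\cap Mod(X)$ (sheaves of $k$-vector spaces with micro-support at infinity in the unit conormal of $L$, microlocally simple with Morse cone in degree $0$) are equivalent to data $(V,\rho,W_s,\rho_s,T_s)$: $\rho:\pi_1(X\setminus L)\to GL(V)$ the local system on the complement, $W_s$ the stalk on $K_s$, $T_s:W_s\to V$ the injective restriction map with one-dimensional cokernel, the meridian of $K_s$ acting trivially on its image and the longitude action $\rho(\ell_s)$ intertwining with the monodromy of $K_s$; we view $W_s\subset V$. $F$ is reduced if it admits no nonzero locally constant subsheaf, no nonzero locally constant quotient, and no direct summand $F'$ that is the kernel of a surjection from a nonzero locally constant sheaf onto $i'_*k_{L''}$ for a sublink $L''$. $A_c$ denotes trivialized parallel transport along a path $c$, $M_t=\rho(m_t)$. A local trivialization is an $r$-tuple of surjective linear maps $f_s:V\to k$ with $f_s|_{W_s}=0$. $\epsilon_{(F,f)}:\mathrm{Cord}(L)\to k$ is the augmentation of the framed cord algebra given on generators by $\epsilon(c_{st})=f_sA_{c_{st}}(\mathrm{id}_V-M_t)f_t^{-1}$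 for framed cords $c_{st}$ from the framing curve of $K_s$ to that of $K_t$, $\epsilon(\lambda_s)=f_sA_{\ell_s}f_s^{-1}$, $\epsilon(\mu_s)=1-f_s(\mathrm{id}_V-M_s)f_s^{-1}$, where $f_s^{-1}$ is any right inverse of $f_s$ (the result is independent of this choice). Dilation: $d\in(k^* )^r$ sends $\epsilon$ to $\epsilon'$ with $\epsilon'(\lambda_s)=\epsilon(\lambda_s)$, $\epsilon'(\mu_s)=\epsilon(\mu_s)$, $\epsilon'(c_{st})=\frac{d_s}{d_t}\epsilon(c_{st})$; $\mathcal{A}ug$ is the set of augmentations modulo this action. *)

theory Defs
  imports Complex_Main "HOL-Algebra.Group"
begin

text \<open>
Algebraic model of a sheaf F in Sh^{s,0}_{Lambda_L}(X) cap Mod(X) via the data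
(V, rho, W_s, rho_s, T_s) described in the context.  G plays the role of pi_1(X minus L) (with a base point; each W_s is
viewed inside V via a fixed basing path), m s and l s are the (based) meridian and
longitude of K_s, rho is the monodromy representation on V (a k-vector space, given by
the scalar multiplication scale), and W s is the subspace T_s(W_s) of V.
The monodromy rho_s of K_s is the restriction of rho (l s) to W s.
\<close>

definition codim1_in :: "('k::field \<Rightarrow> 'v::ab_group_add \<Rightarrow> 'v) \<Rightarrow> 'v set \<Rightarrow> 'v set \<Rightarrow> bool" where
  "codim1_in scale A W \<longleftrightarrow> W \<subseteq> A \<and> (\<exists>v\<in>A. v \<notin> W \<and> (\<forall>x\<in>A. \<exists>c. x - scale c v \<in> W))"

definition is_rep :: "('k::field \<Rightarrow> 'v::ab_group_add \<Rightarrow> 'v) \<Rightarrow> ('g, 'b) monoid_scheme \<Rightarrow> ('g \<Rightarrow> 'v \<Rightarrow> 'v) \<Rightarrow> bool" where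
  "is_rep scale G \<rho> \<longleftrightarrow>
     (\<forall>g\<in>carrier G. Vector_Spaces.linear scale scale (\<rho> g) \<and> bij (\<rho> g)) \<and>
     (\<forall>g\<in>carrier G. \<forall>h\<in>carrier G. \<rho> (g \<otimes>\<^bsub>G\<^esub> h) = \<rho> g \<circ> \<rho> h) \<and>
     \<rho> \<one>\<^bsub>G\<^esub> = id"

definition link_sheaf_data ::
  "('k::field \<Rightarrow> 'v::ab_group_add \<Rightarrow> 'v) \<Rightarrow> ('g, 'b) monoid_scheme \<Rightarrow> ('g \<Rightarrow> 'v \<Rightarrow> 'v)
   \<Rightarrow> nat \<Rightarrow> (nat \<Rightarrow> 'g) \<Rightarrow> (nat \<Rightarrow> 'g) \<Rightarrow> (nat \<Rightarrow> 'v set) \<Rightarrow> bool" where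
  "link_sheaf_data scale G \<rho> r m l W \<longleftrightarrow>
     vector_space scale \<and> group G \<and> is_rep scale G \<rho> \<and>
     (\<forall>s\<in>{1..r}.
        m s \<in> carrier G \<and> l s \<in> carrier G \<and> m s \<otimes>\<^bsub>G\<^esub> l s = l s \<otimes>\<^bsub>G\<^esub> m s \<and>
        module.subspace scale (W s) \<and> codim1_in scale UNIV (W s) \<and>
        (\<forall>w\<in>W s. \<rho> (m s) w = w) \<and>
        \<rho> (l s) ` W s \<subseteq> W s)"

definition no_const_subsheaf where
  "no_const_subsheaf scale G \<rho> r W \<longleftrightarrow>
     \<not> (\<exists>U. module.subspace scale U \<and> U \<noteq> {0} \<and> (\<forall>s\<in>{1..r}. U \<subseteq> W s) \<and>
            (\<forall>g\<in>carrier G. \<forall>u\<in>U. \<rho> g u = u))"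

definition no_const_quotient where
  "no_const_quotient scale G \<rho> r W \<longleftrightarrow>
     \<not> (\<exists>U. module.subspace scale U \<and> U \<noteq> UNIV \<and>
            (\<forall>g\<in>carrier G. \<forall>v. \<rho> g v - v \<in> U) \<and>
            (\<forall>s\<in>{1..r}. \<forall>v. \<exists>w\<in>W s. v - w \<in> U))"

text \<open>A direct summand F' of F which is the kernel of a surjection from the constant sheaf
E_X (E nonzero) onto i'_* k_{L''}: its data are V' = E (trivial monodromy), W'_s = E for
s not in L'' and W'_s = a hyperplane of E for s in L''; being a direct summand means
V = E (+) V'' with V'' rho-invariant and W_s = (W_s cap E) (+) (W_s cap V'').\<close>
definition no_special_summand where
  "no_special_summand scale G \<rho> r W \<longleftrightarrow>
     \<not> (\<exists>E V2 L2. module.subspace scale E \<and> E \<noteq> {0} \<and> module.subspace scale V2 \<and>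
            E \<inter> V2 = {0} \<and> (\<forall>v. \<exists>e\<in>E. \<exists>y\<in>V2. v = e + y) \<and>
            (\<forall>g\<in>carrier G. \<forall>e\<in>E. \<rho> g e = e) \<and>
            (\<forall>g\<in>carrier G. \<rho> g ` V2 \<subseteq> V2) \<and>
            L2 \<subseteq> {1..r} \<and>
            (\<forall>s\<in>{1..r}. \<forall>w\<in>W s. \<exists>e\<in>E \<inter> W s. \<exists>y\<in>V2 \<inter> W s. w = e + y) \<and>
            (\<forall>s\<in>{1..r} - L2. E \<subseteq> W s) \<and>
            (\<forall>s\<in>L2. codim1_in scale E (E \<inter> W s)))"

definition reduced where
  "reduced scale G \<rho> r W \<longleftrightarrow>
     no_const_subsheaf scale G \<rho> r W \<and> no_const_quotient scale G \<rho> r W \<and>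
     no_special_summand scale G \<rho> r W"

definition local_trivialization ::
  "('k::field \<Rightarrow> 'v::ab_group_add \<Rightarrow> 'v) \<Rightarrow> nat \<Rightarrow> (nat \<Rightarrow> 'v set) \<Rightarrow> (nat \<Rightarrow> 'v \<Rightarrow> 'k) \<Rightarrow> bool" where
  "local_trivialization scale r W f \<longleftrightarrow>
     (\<forall>s\<in>{1..r}. Vector_Spaces.linear scale ((*) :: 'k \<Rightarrow> 'k \<Rightarrow> 'k) (f s) \<and> surj (f s) \<and>
                 (\<forall>w\<in>W s. f s w = 0))"

text \<open>A right inverse of f : V -> k is determined by the vector f^{-1}(1).\<close>
definition rinv_vec :: "('v \<Rightarrow> 'k::field) \<Rightarrow> 'v" where
  "rinv_vec h = (SOME v. h v = 1)"

text \<open>epsilon(c_st) for a cord whose trivialized parallel transport is rho gamma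
(gamma the based loop obtained by closing the cord with the basing paths).\<close>
definition aug_cord where
  "aug_cord \<rho> m f s t \<gamma> = f s (\<rho> \<gamma> (rinv_vec (f t) - \<rho> (m t) (rinv_vec (f t))))"

definition aug_lambda where
  "aug_lambda \<rho> l f s = f s (\<rho> (l s) (rinv_vec (f s)))"

definition aug_mu where
  "aug_mu \<rho> m f s = 1 - f s (rinv_vec (f s) - \<rho> (m s) (rinv_vec (f s)))"

definition dilation_equiv where
  "dilation_equiv G \<rho> r m l f g \<longleftrightarrow>
     (\<exists>d :: nat \<Rightarrow> 'k::field.
        (\<forall>s\<in>{1..r}. d s \<noteq> 0) \<and>
        (\<forall>s\<in>{1..r}. aug_lambda \<rho> l g s = aug_lambda \<rho> l f s \<and> aug_mu \<rho> m g s = aug_mu \<rho> m f s) \<and>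
        (\<forall>s\<in>{1..r}. \<forall>t\<in>{1..r}. \<forall>\<gamma>\<in>carrier G.
            aug_cord \<rho> m g s t \<gamma> = d s / d t * aug_cord \<rho> m f s t \<gamma>))"

end

theory Submission
  imports Defs
begin

lemma additive_diff:
  fixes h :: "'a::ab_group_add \<Rightarrow> 'b::ab_group_add"
  assumes "\<And>x y. h (x + y) = h x + h y"
  shows "h (x - y) = h x - h y"
proof -
  have "h (x - y) + h y = h x" using assms[of "x - y" y] by simp
  thus ?thesis by (simp add: eq_diff_eq)
qed

lemma lin_facts:
  assumes "Vector_Spaces.linear s1 s2 h"
  shows "h (x + y) = h x + h y" "h (s1 c x) = s2 c (h x)" "h (x - y) = h x - h y"
proof -
  have L: "vector_space s1 \<and> vector_space s2 \<and> (\<forall>x y. h (x + y) = h x + h y) \<and> (\<forall>c x. h (s1 c x) = s2 c (h x))"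
    using Vector_Spaces.linear_iff[THEN iffD1, OF assms] .
  have a: "\<And>x y. h (x + y) = h x + h y" and b: "\<And>c x. h (s1 c x) = s2 c (h x)"
    using L by blast+
  show "h (x + y) = h x + h y" "h (s1 c x) = s2 c (h x)" using a b by auto
  show "h (x - y) = h x - h y" by (rule additive_diff[OF a])
qed

lemma kernel_lemma:
  fixes scale :: "'k::field \<Rightarrow> 'v::ab_group_add \<Rightarrow> 'v" and h :: "'v \<Rightarrow> 'k"
  assumes vs: "vector_space scale" and sub: "module.subspace scale W"
    and cd: "codim1_in scale UNIV W"
    and lin: "Vector_Spaces.linear scale (*) h" and su: "surj h" and z: "\<forall>w\<in>W. h w = 0"
  obtains v0 where "h v0 \<noteq> 0" "\<And>x. \<exists>c. x - scale c v0 \<in> W"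
    "\<And>x. h x = 0 \<Longrightarrow> x \<in> W"
proof -
  have ms: "module scale" using vs by (simp add: module_iff_vector_space)
  note msimps = module.scale_zero_left[OF ms] module.scale_right_diff_distrib[OF ms]
  from cd obtain v0 where v0: "v0 \<notin> W" "\<And>x. \<exists>c. x - scale c v0 \<in> W"
    unfolding codim1_in_def by auto
  have hx: "h x = c * h v0" if "x - scale c v0 \<in> W" for x c
  proof -
    have "h (x - scale c v0) = 0" using z that by auto
    thus ?thesis using lin_facts[OF lin] by simp
  qed
  have nz: "h v0 \<noteq> 0"
  proof
    assume 0: "h v0 = 0"
    obtain x where "h x = 1" using su by (metis surjD)
    moreover obtain c where "x - scale c v0 \<in> W" using v0 by blast
    ultimately show False using hx 0 by simp
  qed
  have "x \<in> W" if "h x = 0" for x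
  proof -
    obtain c where c: "x - scale c v0 \<in> W" using v0 by blast
    then have "c = 0" using hx[OF c] that nz by simp
    with c show ?thesis by (simp add: msimps)
  qed
  then show ?thesis using that nz v0 by blast
qed

lemma prop_lemma:
  fixes scale :: "'k::field \<Rightarrow> 'v::ab_group_add \<Rightarrow> 'v" and f g :: "'v \<Rightarrow> 'k"
  assumes vs: "vector_space scale" and sub: "module.subspace scale W"
    and cd: "codim1_in scale UNIV W"
    and linf: "Vector_Spaces.linear scale (*) f" and suf: "surj f" and zf: "\<forall>w\<in>W. f w = 0"
    and ling: "Vector_Spaces.linear scale (*) g" and sug: "surj g" and zg: "\<forall>w\<in>W. g w = 0"
  shows "\<exists>c. c \<noteq> 0 \<and> (\<forall>x. g x = c * f x)"
proof -
  have ms: "module scale" using vs by (simp add: module_iff_vector_space)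
  note msimps = module.scale_zero_left[OF ms] module.scale_right_diff_distrib[OF ms]
  obtain v0 where v0: "f v0 \<noteq> 0" "\<And>x. \<exists>c. x - scale c v0 \<in> W"
    using kernel_lemma[OF vs sub cd linf suf zf] by blast
  have gv0: "g v0 \<noteq> 0"
  proof
    assume "g v0 = 0"
    then have "g v0 = 0" .
    obtain v1 where "g v1 \<noteq> 0" "\<And>x. g x = 0 \<Longrightarrow> x \<in> W"
      using kernel_lemma[OF vs sub cd ling sug zg] by blast
    then have "v0 \<in> W" using \<open>g v0 = 0\<close> by blast
    then show False using zf v0 by auto
  qed
  have "g x = (g v0 / f v0) * f x" for x
  proof -
    obtain c where c: "x - scale c v0 \<in> W" using v0 by blast
    have "f (x - scale c v0) = 0" "g (x - scale c v0) = 0" using c zf zg by auto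
    then have "f x = c * f v0" "g x = c * g v0" using lin_facts[OF linf] lin_facts[OF ling] by auto
    then show ?thesis using v0 by simp
  qed
  moreover have "g v0 / f v0 \<noteq> 0" using gv0 v0 by simp
  ultimately show ?thesis by blast
qed

lemma decomp:
  fixes scale :: "'k::field \<Rightarrow> 'v::ab_group_add \<Rightarrow> 'v" and f g :: "'v \<Rightarrow> 'k"
  assumes vs: "vector_space scale" and sub: "module.subspace scale W"
    and cd: "codim1_in scale UNIV W"
    and linf: "Vector_Spaces.linear scale (*) f" and suf: "surj f" and zf: "\<forall>w\<in>W. f w = 0"
    and c: "c \<noteq> 0" "\<forall>x. g x = c * f x"
    and u: "f u = 1" and v: "g v = 1"
  shows "v - scale (1 / c) u \<in> W"
proof -
  have ms: "module scale" using vs by (simp add: module_iff_vector_space)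
  note msimps = module.scale_zero_left[OF ms] module.scale_right_diff_distrib[OF ms]
  obtain v0 where k: "\<And>x. f x = 0 \<Longrightarrow> x \<in> W"
    using kernel_lemma[OF vs sub cd linf suf zf] by blast
  have "f v = 1 / c" using v c by (simp add: field_simps)
  then have "f (v - scale (1/c) u) = 0" using lin_facts[OF linf] u by simp
  then show ?thesis using k by blast
qed

lemma rinv: "surj h \<Longrightarrow> h (rinv_vec h) = (1::'k::field)"
  unfolding rinv_vec_def by (metis (mono_tags) someI surjD)

lemma fix_diff:
  fixes scale :: "'k::field \<Rightarrow> 'v::ab_group_add \<Rightarrow> 'v"
  assumes vs: "vector_space scale" and sub: "module.subspace scale W"
    and P: "Vector_Spaces.linear scale scale P" and fx: "\<forall>w\<in>W. P w = w"
    and vw: "v - scale a u \<in> W"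
  shows "v - P v = scale a (u - P u)"
proof -
  have ms: "module scale" using vs by (simp add: module_iff_vector_space)
  note msimps = module.scale_zero_left[OF ms] module.scale_right_diff_distrib[OF ms]
  obtain w where wW: "w \<in> W" and v: "v = scale a u + w"
    using vw by (intro that[of "v - scale a u"]) auto
  have Pw: "P w = w" using fx wW by blast
  have "P v = scale a (P u) + w" unfolding v using lin_facts[OF P] Pw by simp
  then show ?thesis unfolding v by (simp add: msimps)
qed

lemma core_s:
  fixes scale :: "'k::field \<Rightarrow> 'v::ab_group_add \<Rightarrow> 'v" and f g :: "'v \<Rightarrow> 'k"
  assumes vs: "vector_space scale" and sub: "module.subspace scale W"
    and cd: "codim1_in scale UNIV W"
    and linf: "Vector_Spaces.linear scale (*) f" and suf: "surj f" and zf: "\<forall>w\<in>W. f w = 0"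
    and sug: "surj g"
    and c: "c \<noteq> 0" "\<forall>x. g x = c * f x"
    and P: "Vector_Spaces.linear scale scale P" and fx: "\<forall>w\<in>W. P w = w"
    and Q: "Vector_Spaces.linear scale scale Q" and QW: "Q ` W \<subseteq> W"
  shows "rinv_vec g - P (rinv_vec g) = scale (1 / c) (rinv_vec f - P (rinv_vec f))"
    and "g (rinv_vec g - P (rinv_vec g)) = f (rinv_vec f - P (rinv_vec f))"
    and "g (Q (rinv_vec g)) = f (Q (rinv_vec f))"
proof -
  have uu: "f (rinv_vec f) = 1" using rinv suf by blast
  have vv: "g (rinv_vec g) = 1" using rinv sug by blast
  have dec: "rinv_vec g - scale (1 / c) (rinv_vec f) \<in> W"
    by (rule decomp[OF vs sub cd linf suf zf c uu vv])
  show md: "rinv_vec g - P (rinv_vec g) = scale (1 / c) (rinv_vec f - P (rinv_vec f))"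
    by (rule fix_diff[OF vs sub P fx dec])
  show "g (rinv_vec g - P (rinv_vec g)) = f (rinv_vec f - P (rinv_vec f))"
    unfolding md using c lin_facts(2)[OF linf] by simp
  obtain w where wW: "w \<in> W" and vw: "rinv_vec g = scale (1 / c) (rinv_vec f) + w"
    using dec by (intro that[of "rinv_vec g - scale (1 / c) (rinv_vec f)"]) auto
  have "Q w \<in> W" using QW wW by blast
  then have "f (Q w) = 0" using zf by blast
  then show "g (Q (rinv_vec g)) = f (Q (rinv_vec f))"
    unfolding vw using c lin_facts[OF linf] lin_facts[OF Q] by simp
qed

theorem proposition4p6:
  fixes scale :: "'k::field \<Rightarrow> 'v::ab_group_add \<Rightarrow> 'v"
    and G :: "('g, 'b) monoid_scheme" and \<rho> :: "'g \<Rightarrow> 'v \<Rightarrow> 'v"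
    and r :: nat and m l :: "nat \<Rightarrow> 'g" and W :: "nat \<Rightarrow> 'v set"
    and f g :: "nat \<Rightarrow> 'v \<Rightarrow> 'k"
  assumes "link_sheaf_data scale G \<rho> r m l W"
    and "reduced scale G \<rho> r W"
    and "local_trivialization scale r W f"
    and "local_trivialization scale r W g"
  shows "dilation_equiv G \<rho> r m l f g"
proof -
  have vs: "vector_space scale" and rep: "is_rep scale G \<rho>"
    and LS: "\<And>s. s \<in> {1..r} \<Longrightarrow> m s \<in> carrier G \<and> l s \<in> carrier G \<and>
        module.subspace scale (W s) \<and> codim1_in scale UNIV (W s) \<and>
        (\<forall>w\<in>W s. \<rho> (m s) w = w) \<and> \<rho> (l s) ` W s \<subseteq> W s"
    using assms(1) unfolding link_sheaf_data_def by auto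
  have linr: "\<And>x. x \<in> carrier G \<Longrightarrow> Vector_Spaces.linear scale scale (\<rho> x)"
    using rep unfolding is_rep_def by auto
  have F: "\<And>s. s \<in> {1..r} \<Longrightarrow> Vector_Spaces.linear scale (*) (f s) \<and> surj (f s) \<and> (\<forall>w\<in>W s. f s w = 0)"
    using assms(3) unfolding local_trivialization_def by auto
  have Gt: "\<And>s. s \<in> {1..r} \<Longrightarrow> Vector_Spaces.linear scale (*) (g s) \<and> surj (g s) \<and> (\<forall>w\<in>W s. g s w = 0)"
    using assms(4) unfolding local_trivialization_def by auto
  have ex: "\<forall>s\<in>{1..r}. \<exists>c. c \<noteq> 0 \<and> (\<forall>x. g s x = c * f s x)"
  proof (intro ballI)
    fix s assume s: "s \<in> {1..r}"
    have A: "module.subspace scale (W s)" "codim1_in scale UNIV (W s)" using LS[OF s] by auto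
    have B: "Vector_Spaces.linear scale (*) (f s)" "surj (f s)" "\<forall>w\<in>W s. f s w = 0"
      using F[OF s] by auto
    have B2: "Vector_Spaces.linear scale (*) (g s)" "surj (g s)" "\<forall>w\<in>W s. g s w = 0"
      using Gt[OF s] by auto
    show "\<exists>c. c \<noteq> 0 \<and> (\<forall>x. g s x = c * f s x)" by (rule prop_lemma[OF vs A B B2])
  qed
  obtain d where d: "\<forall>s\<in>{1..r}. d s \<noteq> 0 \<and> (\<forall>x. g s x = d s * f s x)"
    using bchoice[OF ex] by blast
  have C: "rinv_vec (g s) - \<rho> (m s) (rinv_vec (g s)) = scale (1 / d s) (rinv_vec (f s) - \<rho> (m s) (rinv_vec (f s)))"
     "g s (rinv_vec (g s) - \<rho> (m s) (rinv_vec (g s))) = f s (rinv_vec (f s) - \<rho> (m s) (rinv_vec (f s)))"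
     "g s (\<rho> (l s) (rinv_vec (g s))) = f s (\<rho> (l s) (rinv_vec (f s)))" if s: "s \<in> {1..r}" for s
  proof -
    have A: "module.subspace scale (W s)" "codim1_in scale UNIV (W s)" using LS[OF s] by auto
    have B: "Vector_Spaces.linear scale (*) (f s)" "surj (f s)" "\<forall>w\<in>W s. f s w = 0"
      using F[OF s] by auto
    have B2: "surj (g s)" using Gt[OF s] by auto
    have D: "d s \<noteq> 0" "\<forall>x. g s x = d s * f s x" using d s by auto
    have P: "Vector_Spaces.linear scale scale (\<rho> (m s))" "\<forall>w\<in>W s. \<rho> (m s) w = w"
      using LS[OF s] linr by auto
    have Q: "Vector_Spaces.linear scale scale (\<rho> (l s))" "\<rho> (l s) ` W s \<subseteq> W s"
      using LS[OF s] linr by auto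
    note R = core_s[OF vs A B B2 D P Q]
    show "rinv_vec (g s) - \<rho> (m s) (rinv_vec (g s)) = scale (1 / d s) (rinv_vec (f s) - \<rho> (m s) (rinv_vec (f s)))"
      by (rule R(1))
    show "g s (rinv_vec (g s) - \<rho> (m s) (rinv_vec (g s))) = f s (rinv_vec (f s) - \<rho> (m s) (rinv_vec (f s)))"
      by (rule R(2))
    show "g s (\<rho> (l s) (rinv_vec (g s))) = f s (\<rho> (l s) (rinv_vec (f s)))"
      by (rule R(3))
  qed
  have L: "\<forall>s\<in>{1..r}. aug_lambda \<rho> l g s = aug_lambda \<rho> l f s \<and> aug_mu \<rho> m g s = aug_mu \<rho> m f s"
    unfolding aug_lambda_def aug_mu_def using C by simp
  have K: "\<forall>s\<in>{1..r}. \<forall>t\<in>{1..r}. \<forall>\<gamma>\<in>carrier G. aug_cord \<rho> m g s t \<gamma> = d s / d t * aug_cord \<rho> m f s t \<gamma>"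
  proof (intro ballI)
    fix s t \<gamma> assume s: "s \<in> {1..r}" and t: "t \<in> {1..r}" and \<gamma>: "\<gamma> \<in> carrier G"
    have lf: "Vector_Spaces.linear scale (*) (f s)" using F s by blast
    have D: "\<forall>x. g s x = d s * f s x" using d s by auto
    show "aug_cord \<rho> m g s t \<gamma> = d s / d t * aug_cord \<rho> m f s t \<gamma>"
      unfolding aug_cord_def C(1)[OF t]
      using D lin_facts(2)[OF lf] lin_facts(2)[OF linr[OF \<gamma>]] by simp
  qed
  show ?thesis unfolding dilation_equiv_def using d L K by blast
qed

end
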